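(* For each $\boldsymbol\alpha\in\mathbb C^d$, ${\rm Ann}(L(\boldsymbol\alpha))={\rm Ann}({}^RL(\boldsymbol\alpha))$ (two-sided ideals of $D(R_A)$).
   Context: $A\subset\mathbb Z^d$ is a finite set generating the group $\mathbb Z^d$; $R_A=\mathbb C[\mathbb NA]\subseteq\mathbb C[t_1^{\pm1},\dots,t_d^{\pm1}]$; $D(R_A)=\{P\in\mathbb C[t^{\pm1}]\langle\partial_1,\dots,\partial_d\rangle:P(R_A)\subseteq R_A\}$; $s_j=t_j\partial_j$. $M(\boldsymbol\alpha)=D(R_A)/\sum_iD(R_A)(s_i-\alpha_i)$, ${}^RM(\boldsymbol\alpha)=D(R_A)/\sum_i(s_i-\alpha_i)D(R_A)$. Let $\mathcal O$ be the category of left $D(R_A)$-modules $M=\bigoplus_{\boldsymbol\lambda}M_{\boldsymbol\lambda}$ with finite-dimensional $M_{\boldsymbol\lambda}=\{x:f(s)x=f(\boldsymbol\lambda)x\ \forall f\}$, and ${}^R\mathcal O$ the category of right modules with finite-dimensional $M_{\boldsymbol\lambda}=\{x:xf(s)=f(-\boldsymbol\lambda)x\ \forall f\}$. $L(\boldsymbol\alpha)$ (resp. ${}^RL(\boldsymbol\alpha)$) is the unique simple quotient of $M(\boldsymbol\alpha)$ in $\mathcal O$ (resp. of ${}^RM(\boldsymbol\alpha)$ in ${}^R\mathcal O$). *)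

theory Defs
  imports Complex_Main
begin

text \<open>Laurent polynomials in t_1..t_d are represented by their coefficient functions
  on Z^d (index type 'd); Laurent polynomials proper are the finitely supported ones.
  Elements of C[t^(+-1)]<d_1..d_d> are identified with the operators they induce
  (the action is faithful); the product PQ is composition P o Q.\<close>

type_synonym 'd lpoly = "('d \<Rightarrow> int) \<Rightarrow> complex"
type_synonym 'd lop = "'d lpoly \<Rightarrow> 'd lpoly"

definition unitv :: "'d \<Rightarrow> 'd \<Rightarrow> int" where
  "unitv i = (\<lambda>j. if j = i then 1 else 0)"

definition tshift :: "('d \<Rightarrow> int) \<Rightarrow> 'd lop" where
  "tshift v f = (\<lambda>b. f (\<lambda>j. b j - v j))"

text \<open>partial derivative d_i : t^c maps to c_i t^(c - e_i)\<close>
definition dpart :: "'d \<Rightarrow> 'd lop" where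
  "dpart i f = (\<lambda>b. of_int (b i + 1) * f (\<lambda>j. b j + unitv i j))"

definition scal :: "complex \<Rightarrow> 'd lop" where
  "scal c f = (\<lambda>b. c * f b)"

definition opadd :: "'d lop \<Rightarrow> 'd lop \<Rightarrow> 'd lop" where
  "opadd P Q f = (\<lambda>b. P f b + Q f b)"

definition opsub :: "'d lop \<Rightarrow> 'd lop \<Rightarrow> 'd lop" where
  "opsub P Q f = (\<lambda>b. P f b - Q f b)"

definition opsum :: "'x set \<Rightarrow> ('x \<Rightarrow> 'd lop) \<Rightarrow> 'd lop" where
  "opsum S v f = (\<lambda>b. \<Sum>x\<in>S. v x f b)"

definition lincomb :: "'d lop set \<Rightarrow> ('d lop \<Rightarrow> complex) \<Rightarrow> 'd lop" where
  "lincomb B c f = (\<lambda>b. \<Sum>x\<in>B. c x * x f b)"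

definition euler :: "'d \<Rightarrow> 'd lop" where
  "euler i = tshift (unitv i) \<circ> dpart i"

inductive_set laurent_diffops :: "'d lop set" where
  gen_t: "tshift (unitv i) \<in> laurent_diffops"
| gen_tinv: "tshift (\<lambda>j. - unitv i j) \<in> laurent_diffops"
| gen_d: "dpart i \<in> laurent_diffops"
| gen_scal: "scal c \<in> laurent_diffops"
| add: "P \<in> laurent_diffops \<Longrightarrow> Q \<in> laurent_diffops \<Longrightarrow> opadd P Q \<in> laurent_diffops"
| mult: "P \<in> laurent_diffops \<Longrightarrow> Q \<in> laurent_diffops \<Longrightarrow> P \<circ> Q \<in> laurent_diffops"

inductive_set semigrp :: "('d \<Rightarrow> int) set \<Rightarrow> ('d \<Rightarrow> int) set" for A where
  zero: "(\<lambda>j. 0) \<in> semigrp A"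
| step: "x \<in> semigrp A \<Longrightarrow> a \<in> A \<Longrightarrow> (\<lambda>j. x j + a j) \<in> semigrp A"

definition semigroup_ring :: "('d \<Rightarrow> int) set \<Rightarrow> 'd lpoly set" where
  "semigroup_ring A = {f. finite {b. f b \<noteq> 0} \<and> {b. f b \<noteq> 0} \<subseteq> semigrp A}"

definition DR :: "('d \<Rightarrow> int) set \<Rightarrow> 'd lop set" where
  "DR A = {P \<in> laurent_diffops. \<forall>f \<in> semigroup_ring A. P f \<in> semigroup_ring A}"

definition generates_Zd :: "('d \<Rightarrow> int) set \<Rightarrow> bool" where
  "generates_Zd A \<longleftrightarrow> finite A \<and> (\<forall>z. \<exists>c. z = (\<lambda>j. \<Sum>a\<in>A. c a * a j))"

definition left_ideal :: "('d \<Rightarrow> int) set \<Rightarrow> 'd lop set \<Rightarrow> bool" where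
  "left_ideal A J \<longleftrightarrow> J \<subseteq> DR A \<and> scal 0 \<in> J \<and> (\<forall>P\<in>J. \<forall>Q\<in>J. opadd P Q \<in> J)
     \<and> (\<forall>P\<in>DR A. \<forall>Q\<in>J. P \<circ> Q \<in> J)"

definition right_ideal :: "('d \<Rightarrow> int) set \<Rightarrow> 'd lop set \<Rightarrow> bool" where
  "right_ideal A J \<longleftrightarrow> J \<subseteq> DR A \<and> scal 0 \<in> J \<and> (\<forall>P\<in>J. \<forall>Q\<in>J. opadd P Q \<in> J)
     \<and> (\<forall>P\<in>DR A. \<forall>Q\<in>J. Q \<circ> P \<in> J)"

text \<open>Preimages in D(R_A) of the weight spaces of the left module D(R_A)/J
  (x s_i-eigen with eigenvalue lam_i) and of the right module D(R_A)/J
  (x s_i = -lam_i x).\<close>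
definition lwt :: "('d \<Rightarrow> int) set \<Rightarrow> 'd lop set \<Rightarrow> ('d \<Rightarrow> complex) \<Rightarrow> 'd lop set" where
  "lwt A J lam = {x \<in> DR A. \<forall>i. opsub (euler i \<circ> x) (scal (lam i) \<circ> x) \<in> J}"

definition rwt :: "('d \<Rightarrow> int) set \<Rightarrow> 'd lop set \<Rightarrow> ('d \<Rightarrow> complex) \<Rightarrow> 'd lop set" where
  "rwt A J lam = {x \<in> DR A. \<forall>i. opadd (x \<circ> euler i) (scal (lam i) \<circ> x) \<in> J}"

definition fin_dim_mod :: "'d lop set \<Rightarrow> 'd lop set \<Rightarrow> bool" where
  "fin_dim_mod J W \<longleftrightarrow> (\<exists>B. finite B \<and> B \<subseteq> W \<and> (\<forall>x\<in>W. \<exists>c. opsub x (lincomb B c) \<in> J))"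

text \<open>D(R_A)/J is a weight module (sum of weight spaces) with finite-dimensional weight spaces\<close>
definition in_cat_O :: "('d \<Rightarrow> int) set \<Rightarrow> 'd lop set \<Rightarrow>
    (('d \<Rightarrow> complex) \<Rightarrow> 'd lop set) \<Rightarrow> bool" where
  "in_cat_O A J W \<longleftrightarrow>
     (\<forall>x\<in>DR A. \<exists>\<Lambda> v. finite \<Lambda> \<and> (\<forall>\<mu>\<in>\<Lambda>. v \<mu> \<in> W \<mu>) \<and> opsub x (opsum \<Lambda> v) \<in> J)
     \<and> (\<forall>lam. fin_dim_mod J (W lam))"

text \<open>J is a left ideal containing the s_i - alpha_i with D(R_A)/J simple and in O,
  i.e. D(R_A)/J is a simple quotient of M(alpha) in O (hence is L(alpha)).\<close>
definition simple_quot_left :: "('d \<Rightarrow> int) set \<Rightarrow> ('d \<Rightarrow> complex) \<Rightarrow> 'd lop set \<Rightarrow> bool" where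
  "simple_quot_left A \<alpha> J \<longleftrightarrow> left_ideal A J
     \<and> (\<forall>i. opsub (euler i) (scal (\<alpha> i)) \<in> J)
     \<and> in_cat_O A J (lwt A J)
     \<and> id \<notin> J \<and> (\<forall>K. left_ideal A K \<longrightarrow> J \<subseteq> K \<longrightarrow> K = J \<or> id \<in> K)"

definition simple_quot_right :: "('d \<Rightarrow> int) set \<Rightarrow> ('d \<Rightarrow> complex) \<Rightarrow> 'd lop set \<Rightarrow> bool" where
  "simple_quot_right A \<alpha> J \<longleftrightarrow> right_ideal A J
     \<and> (\<forall>i. opsub (euler i) (scal (\<alpha> i)) \<in> J)
     \<and> in_cat_O A J (rwt A J)
     \<and> id \<notin> J \<and> (\<forall>K. right_ideal A K \<longrightarrow> J \<subseteq> K \<longrightarrow> K = J \<or> id \<in> K)"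

definition Ann_left :: "('d \<Rightarrow> int) set \<Rightarrow> 'd lop set \<Rightarrow> 'd lop set" where
  "Ann_left A J = {P \<in> DR A. \<forall>Q\<in>DR A. P \<circ> Q \<in> J}"

definition Ann_right :: "('d \<Rightarrow> int) set \<Rightarrow> 'd lop set \<Rightarrow> 'd lop set" where
  "Ann_right A J = {P \<in> DR A. \<forall>Q\<in>DR A. Q \<circ> P \<in> J}"

end

theory Submission
  imports Defs "HOL-Library.Function_Algebras"
begin

lemma tshift_apply: "tshift v f b = f (b - v)"
  by (simp add: tshift_def fun_diff_def)

lemma euler_apply: "euler i f b = of_int (b i) * f b"
proof -
  have e: "(\<lambda>j. b j - unitv i j + unitv i j) = b" by auto
  show ?thesis by (simp add: euler_def tshift_def dpart_def unitv_def e)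
qed

inductive_set PF :: "(('d \<Rightarrow> int) \<Rightarrow> complex) set" where
  pconst: "(\<lambda>x. c) \<in> PF"
| pcoord: "(\<lambda>x. of_int (x i)) \<in> PF"
| padd: "p \<in> PF \<Longrightarrow> q \<in> PF \<Longrightarrow> (\<lambda>x. p x + q x) \<in> PF"
| pmult: "p \<in> PF \<Longrightarrow> q \<in> PF \<Longrightarrow> (\<lambda>x. p x * q x) \<in> PF"

lemma PF_shift: "p \<in> PF \<Longrightarrow> (\<lambda>x. p (x + v)) \<in> PF"
proof (induction rule: PF.induct)
  case (pconst c) then show ?case by (rule PF.pconst)
next
  case (pcoord i)
  have "(\<lambda>x. of_int (x i) + of_int (v i) :: complex) \<in> PF" by (rule PF.padd[OF PF.pcoord PF.pconst])
  then show ?case by simp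
next
  case (padd p q) show ?case by (rule PF.padd[OF padd.IH])
next
  case (pmult p q) show ?case by (rule PF.pmult[OF pmult.IH])
qed

lemma PF_sum: "finite S \<Longrightarrow> (\<And>s. s \<in> S \<Longrightarrow> g s \<in> PF) \<Longrightarrow> (\<lambda>x. \<Sum>s\<in>S. g s x) \<in> PF"
proof (induction rule: finite_induct)
  case empty
  show ?case by (simp only: sum.empty) (rule PF.pconst)
next
  case (insert a S)
  have 1: "g a \<in> PF" by (rule insert.prems) simp
  have 2: "(\<lambda>x. \<Sum>s\<in>S. g s x) \<in> PF" by (rule insert.IH) (rule insert.prems, simp)
  have eq: "(\<lambda>x. \<Sum>s\<in>insert a S. g s x) = (\<lambda>x. g a x + (\<Sum>s\<in>S. g s x))"
    using insert.hyps by simp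
  show ?case unfolding eq by (rule PF.padd[OF 1 2])
qed

definition nf :: "('d \<Rightarrow> int) set \<Rightarrow> (('d \<Rightarrow> int) \<Rightarrow> ('d \<Rightarrow> int) \<Rightarrow> complex) \<Rightarrow> 'd lop" where
  "nf F r = (\<lambda>f b. \<Sum>a\<in>F. r a (b - a) * f (b - a))"

definition NF :: "'d lop \<Rightarrow> bool" where
  "NF P \<longleftrightarrow> (\<exists>F r. finite F \<and> (\<forall>a\<in>F. r a \<in> PF) \<and> P = nf F r)"

lemma NF_single: "p \<in> PF \<Longrightarrow> P = nf {a} (\<lambda>_. p) \<Longrightarrow> NF P"
  unfolding NF_def by (intro exI[of _ "{a}"] exI[of _ "\<lambda>_. p"]) simp

lemma NF_tshift: "NF (tshift a)"
proof (rule NF_single[OF PF.pconst[of 1], of _ a])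
  show "tshift a = nf {a} (\<lambda>_ _. 1)" by (auto simp: nf_def tshift_apply intro!: ext)
qed

lemma NF_dpart: "NF (dpart i)"
proof (rule NF_single[OF PF.pcoord[of i], of _ "- unitv i"])
  show "dpart i = nf {- unitv i} (\<lambda>_ x. of_int (x i))"
  proof (intro ext)
    fix f b
    have e: "(\<lambda>j. b j + unitv i j) = b - - unitv i" by auto
    show "dpart i f b = nf {- unitv i} (\<lambda>_ x. of_int (x i)) f b"
      by (simp add: nf_def dpart_def e) (simp add: unitv_def)
  qed
qed

lemma NF_scal: "NF (scal c)"
proof (rule NF_single[OF PF.pconst[of c], of _ 0])
  show "scal c = nf {0} (\<lambda>_ _. c)" by (auto simp: nf_def scal_def intro!: ext)
qed

lemma NF_add: fixes P Q :: "'d lop" assumes "NF P" "NF Q" shows "NF (opadd P Q)"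
proof -
  obtain F1 r1 where 1: "finite F1" "\<forall>a\<in>F1. r1 a \<in> PF" "P = nf F1 r1" using assms(1) NF_def by blast
  obtain F2 r2 where 2: "finite F2" "\<forall>a\<in>F2. r2 a \<in> PF" "Q = nf F2 r2" using assms(2) NF_def by blast
  define r where "r = (\<lambda>a x. (if a \<in> F1 then r1 a x else 0) + (if a \<in> F2 then r2 a x else 0))"
  have PFr: "\<forall>a\<in>F1 \<union> F2. r a \<in> PF"
  proof
    fix a assume "a \<in> F1 \<union> F2"
    have A: "(\<lambda>x. if a \<in> F1 then r1 a x else 0) \<in> PF" by (cases "a \<in> F1") (use 1 PF.pconst[of 0] in auto)
    have B: "(\<lambda>x. if a \<in> F2 then r2 a x else 0) \<in> PF" by (cases "a \<in> F2") (use 2 PF.pconst[of 0] in auto)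
    show "r a \<in> PF" unfolding r_def using PF.padd[OF A B] by simp
  qed
  have eqn: "opadd P Q = nf (F1 \<union> F2) r"
  proof (intro ext)
    fix f b
    have s1: "(\<Sum>a\<in>F1 \<union> F2. (if a \<in> F1 then r1 a (b - a) else 0) * f (b - a)) = (\<Sum>a\<in>F1. r1 a (b - a) * f (b - a))"
      by (rule sum.mono_neutral_cong_right) (use 1 2 in auto)
    have s2: "(\<Sum>a\<in>F1 \<union> F2. (if a \<in> F2 then r2 a (b - a) else 0) * f (b - a)) = (\<Sum>a\<in>F2. r2 a (b - a) * f (b - a))"
      by (rule sum.mono_neutral_cong_right) (use 1 2 in auto)
    show "opadd P Q f b = nf (F1 \<union> F2) r f b"
      unfolding opadd_def 1(3) 2(3) nf_def r_def
      by (simp add: distrib_right sum.distrib s1[symmetric] s2[symmetric])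
  qed
  show ?thesis unfolding NF_def
    by (rule exI[of _ "F1 \<union> F2"], rule exI[of _ r]) (simp add: PFr 1(1) 2(1) eqn)
qed

lemma NF_comp: fixes P Q :: "'d lop" assumes "NF P" "NF Q" shows "NF (P \<circ> Q)"
proof -
  obtain F1 r1 where 1: "finite F1" "\<forall>a\<in>F1. r1 a \<in> PF" "P = nf F1 r1" using assms(1) NF_def by blast
  obtain F2 r2 where 2: "finite F2" "\<forall>a\<in>F2. r2 a \<in> PF" "Q = nf F2 r2" using assms(2) NF_def by blast
  define S where "S = F1 \<times> F2"
  define g where "g = (\<lambda>p::('d\<Rightarrow>int)\<times>('d\<Rightarrow>int). fst p + snd p)"
  define F where "F = g ` S"
  define r where "r = (\<lambda>a x. \<Sum>p\<in>{p \<in> S. g p = a}. r1 (fst p) (x + snd p) * r2 (snd p) x)"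
  have finS: "finite S" using 1 2 S_def by auto
  have finF: "finite F" using finS F_def by auto
  have PFr: "\<forall>a\<in>F. r a \<in> PF"
  proof
    fix a assume "a \<in> F"
    show "r a \<in> PF" unfolding r_def
    proof (rule PF_sum)
      show "finite {p \<in> S. g p = a}" using finS by auto
      fix p assume "p \<in> {p \<in> S. g p = a}"
      then have "fst p \<in> F1" "snd p \<in> F2" using S_def by auto
      then show "(\<lambda>x. r1 (fst p) (x + snd p) * r2 (snd p) x) \<in> PF"
        using 1 2 PF.pmult PF_shift by blast
    qed
  qed
  have eqn: "P \<circ> Q = nf F r"
  proof (intro ext)
    fix f b
    have "(P \<circ> Q) f b = (\<Sum>a1\<in>F1. \<Sum>a2\<in>F2. r1 a1 (b - a1) * (r2 a2 (b - a1 - a2) * f (b - a1 - a2)))"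
      by (simp add: 1(3) 2(3) nf_def sum_distrib_left)
    also have "\<dots> = (\<Sum>p\<in>S. r1 (fst p) (b - fst p) * (r2 (snd p) (b - fst p - snd p) * f (b - fst p - snd p)))"
      unfolding S_def by (simp add: sum.cartesian_product split_beta)
    also have "\<dots> = (\<Sum>a\<in>F. \<Sum>p\<in>{p \<in> S. g p = a}. r1 (fst p) (b - fst p) * (r2 (snd p) (b - fst p - snd p) * f (b - fst p - snd p)))"
      unfolding F_def by (rule sum.group[symmetric]) (use finS in auto)
    also have "\<dots> = (\<Sum>a\<in>F. r a (b - a) * f (b - a))"
      unfolding r_def sum_distrib_right
    proof (rule sum.cong[OF refl], rule sum.cong[OF refl])
      fix a p assume "p \<in> {p \<in> S. g p = a}"
      then have a: "a = fst p + snd p" using g_def by auto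
      have e1: "b - a + snd p = b - fst p" using a by (simp add: algebra_simps)
      have e2: "b - a = b - fst p - snd p" using a by (simp add: algebra_simps)
      show "r1 (fst p) (b - fst p) * (r2 (snd p) (b - fst p - snd p) * f (b - fst p - snd p)) =
          r1 (fst p) (b - a + snd p) * r2 (snd p) (b - a) * f (b - a)"
        by (simp add: e1 e2)
    qed
    finally show "(P \<circ> Q) f b = nf F r f b" by (simp add: nf_def)
  qed
  show ?thesis unfolding NF_def
    by (rule exI[of _ F], rule exI[of _ r]) (simp add: PFr finF eqn)
qed

lemma NF_ld: "P \<in> laurent_diffops \<Longrightarrow> NF P"
proof (induction rule: laurent_diffops.induct)
  case (gen_t i) then show ?case by (rule NF_tshift)
next
  case (gen_tinv i) then show ?case by (rule NF_tshift)
next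
  case (gen_d i) then show ?case by (rule NF_dpart)
next
  case (gen_scal c) then show ?case by (rule NF_scal)
next
  case (add P Q) show ?case by (rule NF_add[OF add.IH])
next
  case (mult P Q) show ?case by (rule NF_comp[OF mult.IH])
qed

definition M :: "(('d \<Rightarrow> int) \<Rightarrow> complex) \<Rightarrow> 'd lop" where
  "M p = (\<lambda>f b. p b * f b)"

definition hcomp :: "('d \<Rightarrow> int) \<Rightarrow> (('d \<Rightarrow> int) \<Rightarrow> complex) \<Rightarrow> 'd lop" where
  "hcomp a p = (\<lambda>f b. p (b - a) * f (b - a))"

lemma euler_M: "euler i = M (\<lambda>x. of_int (x i))"
  by (intro ext) (simp add: M_def euler_apply)

lemma euler_ld: "euler i \<in> laurent_diffops"
  unfolding euler_def by (intro laurent_diffops.mult laurent_diffops.gen_t laurent_diffops.gen_d)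

lemma M_ld: "p \<in> PF \<Longrightarrow> M p \<in> laurent_diffops"
proof (induction rule: PF.induct)
  case (pconst c)
  have e: "M (\<lambda>x. c) = scal c" by (intro ext) (simp add: M_def scal_def)
  show ?case unfolding e by (rule laurent_diffops.gen_scal)
next
  case (pcoord i) show ?case unfolding euler_M[symmetric] by (rule euler_ld)
next
  case (padd p q)
  have e: "M (\<lambda>x. p x + q x) = opadd (M p) (M q)" by (intro ext) (simp add: M_def opadd_def distrib_right)
  show ?case unfolding e by (rule laurent_diffops.add[OF padd.IH])
next
  case (pmult p q)
  have e: "M (\<lambda>x. p x * q x) = M p \<circ> M q" by (intro ext) (simp add: M_def)
  show ?case unfolding e by (rule laurent_diffops.mult[OF pmult.IH])
qed

lemma tshift_add: "tshift (u + v) = tshift u \<circ> tshift v"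
  by (intro ext) (simp add: tshift_apply diff_diff_eq)

lemma tshift_zero: "tshift 0 = scal 1"
  by (intro ext) (simp add: tshift_apply scal_def)

lemma tshift_zero_ld: "tshift 0 \<in> laurent_diffops"
  unfolding tshift_zero by (rule laurent_diffops.gen_scal)

lemma tshift_mult_ld: "tshift (\<lambda>j. k * unitv i j) \<in> laurent_diffops"
proof -
  have pos: "tshift (\<lambda>j. int n * unitv i j) \<in> laurent_diffops" for n
  proof (induction n)
    case 0
    have e: "(\<lambda>j. int 0 * unitv i j) = 0" by (rule ext) simp
    show ?case unfolding e by (rule tshift_zero_ld)
  next
    case (Suc n)
    have e: "(\<lambda>j. int (Suc n) * unitv i j) = unitv i + (\<lambda>j. int n * unitv i j)"
      by (rule ext) (simp add: algebra_simps)
    show ?case unfolding e tshift_add by (rule laurent_diffops.mult[OF laurent_diffops.gen_t Suc.IH])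
  qed
  have neg: "tshift (\<lambda>j. - int n * unitv i j) \<in> laurent_diffops" for n
  proof (induction n)
    case 0
    have e: "(\<lambda>j. - int 0 * unitv i j) = 0" by (rule ext) simp
    show ?case unfolding e by (rule tshift_zero_ld)
  next
    case (Suc n)
    have e: "(\<lambda>j. - int (Suc n) * unitv i j) = (\<lambda>j. - unitv i j) + (\<lambda>j. - int n * unitv i j)"
      by (rule ext) (simp add: algebra_simps)
    show ?case unfolding e tshift_add by (rule laurent_diffops.mult[OF laurent_diffops.gen_tinv Suc.IH])
  qed
  show ?thesis
  proof (cases "k \<ge> 0")
    case True
    then have e: "k = int (nat k)" by simp
    show ?thesis by (subst e) (rule pos)
  next
    case False
    then have e: "k = - int (nat (- k))" by simp
    show ?thesis by (subst e) (rule neg)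
  qed
qed

lemma tshift_ld: "tshift (a :: 'd::finite \<Rightarrow> int) \<in> laurent_diffops"
proof -
  have *: "finite S \<Longrightarrow> tshift (\<lambda>j. \<Sum>i\<in>S. a i * unitv i j) \<in> laurent_diffops" for S :: "'d set"
  proof (induction rule: finite_induct)
    case empty
    have e: "(\<lambda>j. \<Sum>i\<in>{}. a i * unitv i j) = 0" by (rule ext) simp
    show ?case unfolding e by (rule tshift_zero_ld)
  next
    case (insert x S)
    have e: "(\<lambda>j. \<Sum>i\<in>insert x S. a i * unitv i j) = (\<lambda>j. a x * unitv x j) + (\<lambda>j. \<Sum>i\<in>S. a i * unitv i j)"
      by (rule ext) (simp add: insert.hyps)
    show ?case unfolding e tshift_add by (rule laurent_diffops.mult[OF tshift_mult_ld insert.IH])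
  qed
  have eq: "(\<lambda>j. \<Sum>i\<in>UNIV. a i * unitv i j) = a"
  proof
    fix j
    have "(\<Sum>i\<in>UNIV. a i * unitv i j) = (\<Sum>i\<in>UNIV. if i = j then a j else 0)"
      by (rule sum.cong) (auto simp: unitv_def)
    then show "(\<Sum>i\<in>UNIV. a i * unitv i j) = a j" by simp
  qed
  have h: "tshift (\<lambda>j. \<Sum>i\<in>UNIV. a i * unitv i j) \<in> laurent_diffops" by (rule *[OF finite_UNIV])
  show ?thesis using h unfolding eq .
qed

lemma comp_eq: "hcomp a p = tshift a \<circ> M p"
  by (intro ext) (simp add: hcomp_def tshift_apply M_def)

lemma comp_ld: "p \<in> PF \<Longrightarrow> hcomp (a :: 'd::finite \<Rightarrow> int) p \<in> laurent_diffops"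
  unfolding comp_eq by (intro laurent_diffops.mult tshift_ld M_ld)

lemma nf_empty: "nf {} r = scal 0"
  by (auto simp: nf_def scal_def intro!: ext)

lemma nf_insert: "finite F \<Longrightarrow> a \<notin> F \<Longrightarrow> nf (insert a F) r = opadd (hcomp a (r a)) (nf F r)"
  by (auto simp: nf_def opadd_def hcomp_def intro!: ext)

lemma nf_single: "nf {a} r = hcomp a (r a)"
  by (auto simp: nf_def hcomp_def intro!: ext)

lemma nf_cong: "(\<And>a. a \<in> F \<Longrightarrow> r a = r' a) \<Longrightarrow> nf F r = nf F r'"
  by (auto simp: nf_def intro!: ext sum.cong)

lemma DR_ld: "P \<in> DR A \<Longrightarrow> P \<in> laurent_diffops" by (simp add: DR_def)
lemma DR_pres: "P \<in> DR A \<Longrightarrow> f \<in> semigroup_ring A \<Longrightarrow> P f \<in> semigroup_ring A" by (simp add: DR_def)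

lemma DR_comp: "P \<in> DR A \<Longrightarrow> Q \<in> DR A \<Longrightarrow> P \<circ> Q \<in> DR A"
  by (simp add: DR_def laurent_diffops.mult)

lemma DR_add: "P \<in> DR A \<Longrightarrow> Q \<in> DR A \<Longrightarrow> opadd P Q \<in> DR A"
proof -
  assume P: "P \<in> DR A" and Q: "Q \<in> DR A"
  have "opadd P Q f \<in> semigroup_ring A" if f: "f \<in> semigroup_ring A" for f
  proof -
    have a: "P f \<in> semigroup_ring A" "Q f \<in> semigroup_ring A" using P Q f DR_pres by blast+
    have sub: "{b. opadd P Q f b \<noteq> 0} \<subseteq> {b. P f b \<noteq> 0} \<union> {b. Q f b \<noteq> 0}"
      by (auto simp: opadd_def)
    then show ?thesis using a unfolding semigroup_ring_def by (auto intro: finite_subset)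
  qed
  then show ?thesis using P Q by (simp add: DR_def laurent_diffops.add)
qed

lemma M_pres: "f \<in> semigroup_ring A \<Longrightarrow> M p f \<in> semigroup_ring A"
proof -
  assume f: "f \<in> semigroup_ring A"
  have "{b. M p f b \<noteq> 0} \<subseteq> {b. f b \<noteq> 0}" by (auto simp: M_def)
  then show ?thesis using f unfolding semigroup_ring_def by (auto intro: finite_subset)
qed

lemma DR_scal: "scal c \<in> DR A"
proof -
  have e: "scal c = M (\<lambda>_. c)" by (intro ext) (simp add: M_def scal_def)
  have "\<forall>f\<in>semigroup_ring A. scal c f \<in> semigroup_ring A" unfolding e using M_pres by blast
  then show ?thesis by (simp add: DR_def laurent_diffops.gen_scal)
qed

lemma DR_M: "p \<in> PF \<Longrightarrow> M p \<in> DR A"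
  unfolding DR_def using M_pres M_ld by blast

lemma DR_euler: "euler i \<in> DR A"
  unfolding euler_M by (rule DR_M[OF PF.pcoord])

lemma opsub_eq: "opsub P Q = opadd P (scal (-1) \<circ> Q)"
  by (auto simp: opsub_def opadd_def scal_def intro!: ext)

lemma DR_sub: "P \<in> DR A \<Longrightarrow> Q \<in> DR A \<Longrightarrow> opsub P Q \<in> DR A"
  unfolding opsub_eq by (intro DR_add DR_comp DR_scal)

lemma id_scal: "id = scal 1"
  by (intro ext) (simp add: scal_def)

lemma DR_id: "id \<in> DR A"
  unfolding id_scal by (rule DR_scal)

lemma DR_NF: "P \<in> DR A \<Longrightarrow> NF P"
  by (rule NF_ld[OF DR_ld])

lemma DR_nf: "finite F \<Longrightarrow> (\<And>a. a \<in> F \<Longrightarrow> hcomp a (r a) \<in> DR A) \<Longrightarrow> nf F r \<in> DR A"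
proof (induction rule: finite_induct)
  case empty show ?case unfolding nf_empty by (rule DR_scal)
next
  case (insert a F)
  have 1: "hcomp a (r a) \<in> DR A" using insert.prems by simp
  have 2: "nf F r \<in> DR A" using insert.IH insert.prems by simp
  show ?case unfolding nf_insert[OF insert.hyps] by (rule DR_add[OF 1 2])
qed

lemma delta_in: "c \<in> semigrp A \<Longrightarrow> (\<lambda>b. if b = c then 1 else 0) \<in> semigroup_ring A"
proof -
  assume c: "c \<in> semigrp A"
  have "{b. (if b = c then 1 else 0 :: complex) \<noteq> 0} = {c}" by auto
  then show ?thesis using c unfolding semigroup_ring_def by simp
qed

lemma DR_comp_part:
  fixes A :: "('d::finite \<Rightarrow> int) set"
  assumes P: "nf F r \<in> DR A" and F: "finite F" and PF: "\<forall>a\<in>F. r a \<in> PF" and a0: "a0 \<in> F"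
  shows "hcomp a0 (r a0) \<in> DR A"
proof -
  have key: "c + a0 \<in> semigrp A" if c: "c \<in> semigrp A" and nz: "r a0 c \<noteq> 0" for c
  proof -
    define d where "d = (\<lambda>b. if b = c then 1 else 0 :: complex)"
    have "nf F r d \<in> semigroup_ring A" using DR_pres[OF P delta_in[OF c]] d_def by simp
    moreover have "nf F r d (c + a0) = r a0 c"
    proof -
      have "nf F r d (c + a0) = (\<Sum>a\<in>F. if a = a0 then r a0 c else 0)"
        unfolding nf_def d_def
      proof (rule sum.cong[OF refl])
        fix a assume "a \<in> F"
        have "(c + a0 - a = c) = (a = a0)" by (auto simp: algebra_simps)
        then show "r a (c + a0 - a) * (if c + a0 - a = c then 1 else 0) = (if a = a0 then r a0 c else 0)"
          by auto
      qed
      then show ?thesis using a0 F by simp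
    qed
    ultimately show ?thesis using nz unfolding semigroup_ring_def by auto
  qed
  have "hcomp a0 (r a0) f \<in> semigroup_ring A" if f: "f \<in> semigroup_ring A" for f
  proof -
    have sub: "{b. hcomp a0 (r a0) f b \<noteq> 0} \<subseteq> (\<lambda>c. c + a0) ` {b. f b \<noteq> 0}"
    proof
      fix b assume "b \<in> {b. hcomp a0 (r a0) f b \<noteq> 0}"
      then have "f (b - a0) \<noteq> 0" by (simp add: hcomp_def)
      then show "b \<in> (\<lambda>c. c + a0) ` {b. f b \<noteq> 0}" by (intro image_eqI[of _ _ "b - a0"]) auto
    qed
    have sub2: "{b. hcomp a0 (r a0) f b \<noteq> 0} \<subseteq> semigrp A"
    proof
      fix b assume "b \<in> {b. hcomp a0 (r a0) f b \<noteq> 0}"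
      then have 1: "f (b - a0) \<noteq> 0" "r a0 (b - a0) \<noteq> 0" by (auto simp: hcomp_def)
      then have "b - a0 \<in> semigrp A" using f unfolding semigroup_ring_def by auto
      from key[OF this 1(2)] show "b \<in> semigrp A" by simp
    qed
    show ?thesis using sub sub2 f unfolding semigroup_ring_def by (auto intro: finite_subset)
  qed
  moreover have "hcomp a0 (r a0) \<in> laurent_diffops" by (rule comp_ld) (use PF a0 in blast)
  ultimately show ?thesis by (simp add: DR_def)
qed

definition adc :: "('d \<Rightarrow> complex) \<Rightarrow> 'd \<Rightarrow> 'd lop \<Rightarrow> 'd lop" where
  "adc \<alpha> i X = opsub (opsub (euler i) (scal (\<alpha> i)) \<circ> X) (X \<circ> opsub (euler i) (scal (\<alpha> i)))"

definition ideal_like :: "('d \<Rightarrow> int) set \<Rightarrow> ('d \<Rightarrow> complex) \<Rightarrow> 'd lop set \<Rightarrow> bool" where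
  "ideal_like A \<alpha> I \<longleftrightarrow> I \<subseteq> DR A \<and> scal 0 \<in> I \<and> (\<forall>X\<in>I. \<forall>Y\<in>I. opadd X Y \<in> I)
     \<and> (\<forall>X\<in>I. \<forall>c. scal c \<circ> X \<in> I) \<and> (\<forall>X\<in>I. \<forall>i. adc \<alpha> i X \<in> I)"

lemma NF_scal_comm: "NF X \<Longrightarrow> X \<circ> scal c = scal c \<circ> X"
proof -
  assume "NF X"
  then obtain F r where X: "X = nf F r" unfolding NF_def by blast
  show ?thesis unfolding X
    by (auto simp: nf_def scal_def sum_distrib_left mult.left_commute intro!: ext)
qed

lemma NF_add_distrib: "NF Q \<Longrightarrow> Q \<circ> opadd X Y = opadd (Q \<circ> X) (Q \<circ> Y)"
proof -
  assume "NF Q"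
  then obtain F r where Q: "Q = nf F r" unfolding NF_def by blast
  show ?thesis unfolding Q
    by (auto simp: nf_def opadd_def sum.distrib distrib_left intro!: ext)
qed

lemma NF_zero: "NF Q \<Longrightarrow> Q \<circ> scal 0 = scal 0"
proof -
  assume "NF Q"
  then obtain F r where Q: "Q = nf F r" unfolding NF_def by blast
  show ?thesis unfolding Q by (auto simp: nf_def scal_def intro!: ext)
qed

lemma il_sub: "ideal_like A \<alpha> I \<Longrightarrow> X \<in> I \<Longrightarrow> Y \<in> I \<Longrightarrow> opsub X Y \<in> I"
  unfolding ideal_like_def opsub_eq by blast

lemma left_il:
  assumes "left_ideal A J" "\<forall>i. opsub (euler i) (scal (\<alpha> i)) \<in> J"
  shows "ideal_like A \<alpha> J"
proof -
  have sc: "\<forall>X\<in>J. \<forall>c. scal c \<circ> X \<in> J" using assms(1) DR_scal unfolding left_ideal_def by blast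
  have sub: "opsub X Y \<in> J" if "X \<in> J" "Y \<in> J" for X Y
    using that sc assms(1) unfolding opsub_eq left_ideal_def by blast
  have "adc \<alpha> i X \<in> J" if X: "X \<in> J" for X i
  proof -
    have XD: "X \<in> DR A" using X assms(1) unfolding left_ideal_def by blast
    have e: "opsub (euler i) (scal (\<alpha> i)) \<in> DR A" by (intro DR_sub DR_euler DR_scal)
    have 1: "opsub (euler i) (scal (\<alpha> i)) \<circ> X \<in> J" using assms(1) X e unfolding left_ideal_def by blast
    have 2: "X \<circ> opsub (euler i) (scal (\<alpha> i)) \<in> J" using assms XD unfolding left_ideal_def by blast
    show ?thesis unfolding adc_def using sub[OF 1 2] .
  qed
  then show ?thesis using assms(1) sc unfolding ideal_like_def left_ideal_def by blast
qed

lemma right_il: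
  assumes "right_ideal A J" "\<forall>i. opsub (euler i) (scal (\<alpha> i)) \<in> J"
  shows "ideal_like A \<alpha> J"
proof -
  have sc: "\<forall>X\<in>J. \<forall>c. scal c \<circ> X \<in> J"
  proof (intro ballI allI)
    fix X c assume X: "X \<in> J"
    then have "X \<in> DR A" using assms(1) unfolding right_ideal_def by blast
    then have "scal c \<circ> X = X \<circ> scal c" using NF_scal_comm DR_NF by metis
    then show "scal c \<circ> X \<in> J" using X assms(1) DR_scal unfolding right_ideal_def by metis
  qed
  have sub: "opsub X Y \<in> J" if "X \<in> J" "Y \<in> J" for X Y
    using that sc assms(1) unfolding opsub_eq right_ideal_def by blast
  have "adc \<alpha> i X \<in> J" if X: "X \<in> J" for X i
  proof -
    have XD: "X \<in> DR A" using X assms(1) unfolding right_ideal_def by blast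
    have e: "opsub (euler i) (scal (\<alpha> i)) \<in> DR A" by (intro DR_sub DR_euler DR_scal)
    have 1: "opsub (euler i) (scal (\<alpha> i)) \<circ> X \<in> J" using assms XD unfolding right_ideal_def by blast
    have 2: "X \<circ> opsub (euler i) (scal (\<alpha> i)) \<in> J" using assms(1) X e unfolding right_ideal_def by blast
    show ?thesis unfolding adc_def using sub[OF 1 2] .
  qed
  then show ?thesis using assms(1) sc unfolding ideal_like_def right_ideal_def by blast
qed

lemma opsub_apply: "opsub P Q f b = P f b - Q f b"
  by (simp add: opsub_def)

lemma adc_nf: "adc \<alpha> i (nf F r) = nf F (\<lambda>a x. of_int (a i) * r a x)"
proof (intro ext)
  fix f b
  have A: "opsub (euler i) (scal (\<alpha> i)) g c = (of_int (c i) - \<alpha> i) * g c" for g c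
    by (simp add: opsub_apply scal_def euler_apply left_diff_distrib)
  have "adc \<alpha> i (nf F r) f b = (of_int (b i) - \<alpha> i) * (\<Sum>a\<in>F. r a (b - a) * f (b - a))
      - (\<Sum>a\<in>F. r a (b - a) * ((of_int ((b - a) i) - \<alpha> i) * f (b - a)))"
    unfolding adc_def opsub_apply comp_apply by (simp only: nf_def) (simp add: euler_apply scal_def left_diff_distrib)
  also have "\<dots> = (\<Sum>a\<in>F. (of_int (b i) - \<alpha> i) * (r a (b - a) * f (b - a))
      - r a (b - a) * ((of_int ((b - a) i) - \<alpha> i) * f (b - a)))"
    by (simp only: sum_distrib_left sum_subtractf)
  also have "\<dots> = (\<Sum>a\<in>F. of_int (a i) * r a (b - a) * f (b - a))"
  proof (rule sum.cong[OF refl])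
    fix a
    have "of_int ((b - a) i) = (of_int (b i) - of_int (a i) :: complex)" by simp
    then show "(of_int (b i) - \<alpha> i) * (r a (b - a) * f (b - a))
      - r a (b - a) * ((of_int ((b - a) i) - \<alpha> i) * f (b - a)) = of_int (a i) * r a (b - a) * f (b - a)"
      by (simp only:) (simp add: algebra_simps)
  qed
  finally show "adc \<alpha> i (nf F r) f b = nf F (\<lambda>a x. of_int (a i) * r a x) f b"
    by (simp add: nf_def mult.assoc)
qed

lemma nf_sub_scal: "opsub (nf F r1) (scal c \<circ> nf F r2) = nf F (\<lambda>a x. r1 a x - c * r2 a x)"
proof (intro ext)
  fix f b
  have "opsub (nf F r1) (scal c \<circ> nf F r2) f b = (\<Sum>a\<in>F. r1 a (b - a) * f (b - a)) - c * (\<Sum>a\<in>F. r2 a (b - a) * f (b - a))"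
    by (simp add: opsub_apply scal_def nf_def)
  also have "\<dots> = (\<Sum>a\<in>F. r1 a (b - a) * f (b - a) - c * (r2 a (b - a) * f (b - a)))"
    by (simp only: sum_distrib_left sum_subtractf)
  also have "\<dots> = (\<Sum>a\<in>F. (r1 a (b - a) - c * r2 a (b - a)) * f (b - a))"
    by (rule sum.cong[OF refl]) (simp add: algebra_simps)
  finally show "opsub (nf F r1) (scal c \<circ> nf F r2) f b = nf F (\<lambda>a x. r1 a x - c * r2 a x) f b"
    by (simp add: nf_def)
qed

lemma nf_neutral: "finite F \<Longrightarrow> H \<subseteq> F \<Longrightarrow> (\<And>a x. a \<in> F - H \<Longrightarrow> r a x = 0) \<Longrightarrow> nf F r = nf H r"
  unfolding nf_def by (auto intro!: ext sum.mono_neutral_right)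

lemma nf_split: "finite F \<Longrightarrow> H \<subseteq> F \<Longrightarrow> opsub (nf F r) (nf H r) = nf (F - H) r"
proof (intro ext)
  fix f b assume F: "finite F" and H: "H \<subseteq> F"
  have "(\<Sum>a\<in>F. r a (b - a) * f (b - a)) = (\<Sum>a\<in>F - H. r a (b - a) * f (b - a)) + (\<Sum>a\<in>H. r a (b - a) * f (b - a))"
    by (rule sum.subset_diff[OF H F])
  then show "opsub (nf F r) (nf H r) f b = nf (F - H) r f b" by (simp add: opsub_def nf_def)
qed

lemma nf_in_I:
  assumes IL: "ideal_like A \<alpha> I"
  shows "finite H \<Longrightarrow> (\<And>a. a \<in> H \<Longrightarrow> hcomp a (r a) \<in> I) \<Longrightarrow> nf H r \<in> I"
proof (induction H rule: finite_induct)
  case empty show ?case unfolding nf_empty using IL unfolding ideal_like_def by blast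
next
  case (insert a H)
  have 1: "hcomp a (r a) \<in> I" using insert.prems by simp
  have 2: "nf H r \<in> I" using insert.IH insert.prems by simp
  show ?case unfolding nf_insert[OF insert.hyps] using IL 1 2 unfolding ideal_like_def by blast
qed

lemma comp_scale: "scal c \<circ> hcomp a p = hcomp a (\<lambda>x. c * p x)"
  by (auto simp: scal_def hcomp_def intro!: ext)

lemma il_D: "ideal_like A \<alpha> I \<Longrightarrow> X \<in> I \<Longrightarrow> X \<in> DR A"
  unfolding ideal_like_def by blast
lemma il_zero: "ideal_like A \<alpha> I \<Longrightarrow> scal 0 \<in> I"
  unfolding ideal_like_def by blast
lemma il_add: "ideal_like A \<alpha> I \<Longrightarrow> X \<in> I \<Longrightarrow> Y \<in> I \<Longrightarrow> opadd X Y \<in> I"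
  unfolding ideal_like_def by blast
lemma il_scal: "ideal_like A \<alpha> I \<Longrightarrow> X \<in> I \<Longrightarrow> scal c \<circ> X \<in> I"
  unfolding ideal_like_def by blast
lemma il_adc: "ideal_like A \<alpha> I \<Longrightarrow> X \<in> I \<Longrightarrow> adc \<alpha> i X \<in> I"
  unfolding ideal_like_def by blast

lemma components_in_I:
  assumes IL: "ideal_like A \<alpha> I"
  shows "finite F \<Longrightarrow> (\<forall>a\<in>F. hcomp a (r a) \<in> DR A) \<Longrightarrow> nf F r \<in> I \<Longrightarrow> \<forall>a\<in>F. hcomp a (r a) \<in> I"
proof (induction "card F" arbitrary: F r rule: less_induct)
  case less
  show ?case
  proof (cases "\<forall>a1\<in>F. \<forall>a2\<in>F. a1 = a2")
    case True
    show ?thesis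
    proof
      fix a assume a: "a \<in> F"
      then have "F = {a}" using True by auto
      then have "nf {a} r \<in> I" using less.prems(3) by simp
      then show "hcomp a (r a) \<in> I" unfolding nf_single .
    qed
  next
    case False
    then obtain a1 a2 where a12: "a1 \<in> F" "a2 \<in> F" "a1 \<noteq> a2" by blast
    have "\<exists>i. a1 i \<noteq> a2 i"
    proof (rule ccontr)
      assume "\<not> (\<exists>i. a1 i \<noteq> a2 i)"
      then have "a1 = a2" by (intro ext) simp
      then show False using a12(3) by simp
    qed
    then obtain i where i: "a1 i \<noteq> a2 i" by blast
    define G where "G = {a \<in> F. a i = a1 i}"
    define H where "H = F - G"
    define r' where "r' = (\<lambda>a x. (of_int (a i) - of_int (a1 i)) * r a x)"
    have finF: "finite F" using less.prems by simp
    have GF: "G \<subseteq> F" and HF: "H \<subseteq> F" using G_def H_def by auto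
    have finG: "finite G" by (rule finite_subset[OF GF finF])
    have finH: "finite H" by (rule finite_subset[OF HF finF])
    have a1G: "a1 \<in> G" unfolding G_def using a12(1) by simp
    have a1H: "a1 \<notin> H" unfolding H_def using a1G by simp
    have a2G: "a2 \<notin> G" unfolding G_def using i by simp
    have a2H: "a2 \<in> H" unfolding H_def using a2G a12(2) by simp
    have "H \<noteq> F" using a1H a12(1) by metis
    then have "H \<subset> F" using HF by (rule psubsetI[rotated])
    then have cardH: "card H < card F" by (rule psubset_card_mono[OF finF])
    have "G \<noteq> F" using a2G a12(2) by metis
    then have "G \<subset> F" using GF by (rule psubsetI[rotated])
    then have cardG: "card G < card F" by (rule psubset_card_mono[OF finF])
    have x1: "adc \<alpha> i (nf F r) \<in> I" by (rule il_adc[OF IL less.prems(3)])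
    have x2: "scal (of_int (a1 i)) \<circ> nf F r \<in> I" by (rule il_scal[OF IL less.prems(3)])
    have "opsub (adc \<alpha> i (nf F r)) (scal (of_int (a1 i)) \<circ> nf F r) \<in> I"
      by (rule il_sub[OF IL x1 x2])
    moreover have "opsub (adc \<alpha> i (nf F r)) (scal (of_int (a1 i)) \<circ> nf F r) = nf F r'"
      unfolding adc_nf nf_sub_scal r'_def by (rule nf_cong) (simp add: left_diff_distrib)
    moreover have "nf F r' = nf H r'"
      by (rule nf_neutral[OF finF HF]) (auto simp: r'_def H_def G_def)
    ultimately have inH: "nf H r' \<in> I" by simp
    have DH: "\<forall>a\<in>H. hcomp a (r' a) \<in> DR A"
    proof
      fix a assume "a \<in> H"
      then have "hcomp a (r a) \<in> DR A" using less.prems(2) HF by blast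
      then have "scal (of_int (a i) - of_int (a1 i)) \<circ> hcomp a (r a) \<in> DR A" by (intro DR_comp DR_scal)
      then show "hcomp a (r' a) \<in> DR A" unfolding comp_scale r'_def .
    qed
    have H1: "\<forall>a\<in>H. hcomp a (r' a) \<in> I"
      by (rule less.hyps[OF cardH finH DH inH])
    have H2: "hcomp a (r a) \<in> I" if a: "a \<in> H" for a
    proof -
      have ne: "(of_int (a i) - of_int (a1 i) :: complex) \<noteq> 0" using a H_def G_def by auto
      have "hcomp a (r' a) \<in> I" using H1 a by blast
      then have "scal (1 / (of_int (a i) - of_int (a1 i))) \<circ> hcomp a (r' a) \<in> I"
        by (rule il_scal[OF IL])
      also have "scal (1 / (of_int (a i) - of_int (a1 i))) \<circ> hcomp a (r' a) = hcomp a (r a)"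
        unfolding comp_scale r'_def using ne by simp
      finally show ?thesis .
    qed
    have "nf H r \<in> I" by (rule nf_in_I[OF IL finH H2])
    then have "opsub (nf F r) (nf H r) \<in> I" by (rule il_sub[OF IL less.prems(3)])
    moreover have "F - H = G" using H_def GF by blast
    then have "opsub (nf F r) (nf H r) = nf G r" using nf_split[OF finF HF] by simp
    ultimately have inG: "nf G r \<in> I" by simp
    have DG: "\<forall>a\<in>G. hcomp a (r a) \<in> DR A" using less.prems(2) GF by blast
    have G2: "\<forall>a\<in>G. hcomp a (r a) \<in> I"
      by (rule less.hyps[OF cardG finG DG inG])
    show ?thesis using G2 H2 H_def by blast
  qed
qed

definition d0 :: "'d lop \<Rightarrow> ('d \<Rightarrow> int) \<Rightarrow> complex" where
  "d0 P = (\<lambda>x. P (\<lambda>b. if b = x then 1 else 0) x)"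

definition eps :: "'d lop set \<Rightarrow> 'd lop \<Rightarrow> complex" where
  "eps I P = (THE e. opsub (M (d0 P)) (scal e) \<in> I)"

lemma il_unique:
  assumes IL: "ideal_like A \<alpha> I" and nid: "id \<notin> I"
    and c: "opsub X (scal c) \<in> I" and e: "opsub X (scal e) \<in> I"
  shows "c = e"
proof (rule ccontr)
  assume ne: "c \<noteq> e"
  have "opsub (opsub X (scal e)) (opsub X (scal c)) \<in> I" by (rule il_sub[OF IL e c])
  moreover have "opsub (opsub X (scal e)) (opsub X (scal c)) = scal (c - e)"
    by (intro ext) (simp add: opsub_apply scal_def left_diff_distrib)
  ultimately have "scal (c - e) \<in> I" by simp
  then have mem: "scal (1 / (c - e)) \<circ> scal (c - e) \<in> I" by (rule il_scal[OF IL])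
  have eq: "scal (1 / (c - e)) \<circ> scal (c - e) = id"
    using ne by (intro ext) (simp add: scal_def)
  from mem have "id \<in> I" unfolding eq .
  then show False using nid by blast
qed

lemma d0_nf: "finite F \<Longrightarrow> d0 (nf F r) = (if 0 \<in> F then r 0 else (\<lambda>_. 0))"
proof (intro ext)
  fix x assume F: "finite F"
  have "d0 (nf F r) x = (\<Sum>a\<in>F. r a (x - a) * (if x - a = x then 1 else 0))"
    by (simp add: d0_def nf_def)
  also have "\<dots> = (\<Sum>a\<in>F. if a = 0 then r 0 x else 0)"
  proof (rule sum.cong[OF refl])
    fix a
    have "(x - a = x) = (a = 0)" by (simp add: diff_eq_eq)
    then show "r a (x - a) * (if x - a = x then 1 else 0) = (if a = 0 then r 0 x else 0)" by auto
  qed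
  also have "\<dots> = (if 0 \<in> F then r 0 x else 0)" by (simp add: sum.delta[OF F])
  finally show "d0 (nf F r) x = (if 0 \<in> F then r 0 else (\<lambda>_. 0)) x" by simp
qed

lemma M_zero_hcomp: "M p = hcomp 0 p"
  by (intro ext) (simp add: M_def hcomp_def)

lemma M_const: "M (\<lambda>_. c) = scal c"
  by (intro ext) (simp add: M_def scal_def)

lemma opsub_zero: "opsub X (scal 0) = X"
  by (intro ext) (simp add: opsub_apply scal_def)

context
  fixes A :: "('d::finite \<Rightarrow> int) set" and \<alpha> :: "'d \<Rightarrow> complex" and J J' :: "'d lop set"
  assumes L: "simple_quot_left A \<alpha> J" and R: "simple_quot_right A \<alpha> J'"
begin

lemma LI: "left_ideal A J" using L unfolding simple_quot_left_def by blast
lemma Ls: "\<forall>i. opsub (euler i) (scal (\<alpha> i)) \<in> J" using L unfolding simple_quot_left_def by blast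
lemma Lid: "id \<notin> J" using L unfolding simple_quot_left_def by blast
lemma Lmax: "left_ideal A K \<Longrightarrow> J \<subseteq> K \<Longrightarrow> K = J \<or> id \<in> K" using L unfolding simple_quot_left_def by blast
lemma RI: "right_ideal A J'" using R unfolding simple_quot_right_def by blast
lemma Rs: "\<forall>i. opsub (euler i) (scal (\<alpha> i)) \<in> J'" using R unfolding simple_quot_right_def by blast
lemma Rid: "id \<notin> J'" using R unfolding simple_quot_right_def by blast
lemma Rmax: "right_ideal A K \<Longrightarrow> J' \<subseteq> K \<Longrightarrow> K = J' \<or> id \<in> K" using R unfolding simple_quot_right_def by blast

lemma ILJ: "ideal_like A \<alpha> J" by (rule left_il[OF LI Ls])
lemma ILR: "ideal_like A \<alpha> J'" by (rule right_il[OF RI Rs])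

lemma Lmul: "P \<in> DR A \<Longrightarrow> X \<in> J \<Longrightarrow> P \<circ> X \<in> J" using LI unfolding left_ideal_def by blast
lemma Rmul: "P \<in> DR A \<Longrightarrow> X \<in> J' \<Longrightarrow> X \<circ> P \<in> J'" using RI unfolding right_ideal_def by blast

lemma PF_both: "p \<in> PF \<Longrightarrow> \<exists>c. opsub (M p) (scal c) \<in> J \<and> opsub (M p) (scal c) \<in> J'"
proof (induction rule: PF.induct)
  case (pconst c)
  have "opsub (M (\<lambda>x. c)) (scal c) = scal 0"
    by (intro ext) (simp add: opsub_apply M_def scal_def)
  then show ?case using il_zero[OF ILJ] il_zero[OF ILR] by metis
next
  case (pcoord i)
  have "opsub (M (\<lambda>x. of_int (x i))) (scal (\<alpha> i)) \<in> J \<and> opsub (M (\<lambda>x. of_int (x i))) (scal (\<alpha> i)) \<in> J'"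
    unfolding euler_M[symmetric] using Ls Rs by blast
  then show ?case by blast
next
  case (padd p q)
  obtain c where c: "opsub (M p) (scal c) \<in> J" "opsub (M p) (scal c) \<in> J'" using padd.IH by blast
  obtain d where d: "opsub (M q) (scal d) \<in> J" "opsub (M q) (scal d) \<in> J'" using padd.IH by blast
  have e: "opsub (M (\<lambda>x. p x + q x)) (scal (c + d)) = opadd (opsub (M p) (scal c)) (opsub (M q) (scal d))"
    by (intro ext) (simp add: opsub_apply opadd_def M_def scal_def algebra_simps)
  have "opsub (M (\<lambda>x. p x + q x)) (scal (c + d)) \<in> J"
    unfolding e by (rule il_add[OF ILJ c(1) d(1)])
  moreover have "opsub (M (\<lambda>x. p x + q x)) (scal (c + d)) \<in> J'"
    unfolding e by (rule il_add[OF ILR c(2) d(2)])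
  ultimately show ?case by blast
next
  case (pmult p q)
  obtain c where c: "opsub (M p) (scal c) \<in> J" "opsub (M p) (scal c) \<in> J'" using pmult.IH by blast
  obtain d where d: "opsub (M q) (scal d) \<in> J" "opsub (M q) (scal d) \<in> J'" using pmult.IH by blast
  have e1: "opsub (M (\<lambda>x. p x * q x)) (scal (c * d)) =
      opadd (M p \<circ> opsub (M q) (scal d)) (scal d \<circ> opsub (M p) (scal c))"
    by (intro ext) (simp add: opsub_apply opadd_def M_def scal_def algebra_simps)
  have e2: "opsub (M (\<lambda>x. p x * q x)) (scal (c * d)) =
      opadd (opsub (M p) (scal c) \<circ> M q) (opsub (M q) (scal d) \<circ> scal c)"
    by (intro ext) (simp add: opsub_apply opadd_def M_def scal_def algebra_simps)
  have Mp: "M p \<in> DR A" by (rule DR_M[OF pmult.hyps(1)])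
  have Mq: "M q \<in> DR A" by (rule DR_M[OF pmult.hyps(2)])
  have "opsub (M (\<lambda>x. p x * q x)) (scal (c * d)) \<in> J"
    unfolding e1 by (rule il_add[OF ILJ Lmul[OF Mp d(1)] Lmul[OF DR_scal c(1)]])
  moreover have "opsub (M (\<lambda>x. p x * q x)) (scal (c * d)) \<in> J'"
    unfolding e2 by (rule il_add[OF ILR Rmul[OF Mq c(2)] Rmul[OF DR_scal d(2)]])
  ultimately show ?case by blast
qed

lemma eps_char:
  assumes P: "P \<in> DR A"
  shows "opsub (M (d0 P)) (scal (eps J P)) \<in> J \<and> opsub (M (d0 P)) (scal (eps J P)) \<in> J'"
proof -
  obtain F r where F: "finite F" "\<forall>a\<in>F. r a \<in> PF" "P = nf F r" using DR_NF[OF P] unfolding NF_def by blast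
  have z: "(\<lambda>x. 0) \<in> (PF :: (('d \<Rightarrow> int) \<Rightarrow> complex) set)" by (rule PF.pconst)
  have "d0 P \<in> PF"
    unfolding F(3) d0_nf[OF F(1)] using F(2) z by simp
  then obtain c where c: "opsub (M (d0 P)) (scal c) \<in> J" "opsub (M (d0 P)) (scal c) \<in> J'"
    using PF_both by blast
  have "eps J P = c" unfolding eps_def
  proof (rule the_equality)
    show "opsub (M (d0 P)) (scal c) \<in> J" by (rule c(1))
    fix e assume "opsub (M (d0 P)) (scal e) \<in> J"
    then show "e = c" using il_unique[OF ILJ Lid] c(1) by blast
  qed
  then show ?thesis using c by simp
qed

lemma eps_zero:
  assumes IL: "ideal_like A \<alpha> I" and nid: "id \<notin> I"
    and ch: "\<And>P. P \<in> DR A \<Longrightarrow> opsub (M (d0 P)) (scal (eps J P)) \<in> I"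
    and X: "X \<in> I"
  shows "eps J X = 0"
proof -
  have XD: "X \<in> DR A" by (rule il_D[OF IL X])
  obtain F r where F: "finite F" "\<forall>a\<in>F. r a \<in> PF" "X = nf F r" using DR_NF[OF XD] unfolding NF_def by blast
  have nfD: "nf F r \<in> DR A" using XD F(3) by simp
  have cD: "\<forall>a\<in>F. hcomp a (r a) \<in> DR A" using DR_comp_part[OF nfD F(1) F(2)] by blast
  have cI: "\<forall>a\<in>F. hcomp a (r a) \<in> I" by (rule components_in_I[OF IL F(1) cD]) (use X F(3) in simp)
  have "M (d0 X) \<in> I"
  proof (cases "0 \<in> F")
    case True
    then have "M (d0 X) = hcomp 0 (r 0)" unfolding F(3) d0_nf[OF F(1)] M_zero_hcomp[symmetric] by simp
    then show ?thesis using cI True by simp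
  next
    case False
    then have "M (d0 X) = scal 0" unfolding F(3) d0_nf[OF F(1)] by (simp add: M_const)
    then show ?thesis using il_zero[OF IL] by simp
  qed
  then have "opsub (M (d0 X)) (scal 0) \<in> I" by (simp add: opsub_zero)
  then show ?thesis using il_unique[OF IL nid] ch[OF XD] by blast
qed

lemma eps_zero_L: "X \<in> J \<Longrightarrow> eps J X = 0"
  by (rule eps_zero[OF ILJ Lid]) (use eps_char in blast)+

lemma eps_zero_R: "X \<in> J' \<Longrightarrow> eps J X = 0"
  by (rule eps_zero[OF ILR Rid]) (use eps_char in blast)+

lemma eps_add:
  assumes X: "X \<in> DR A" and Y: "Y \<in> DR A"
  shows "eps J (opadd X Y) = eps J X + eps J Y"
proof -
  have XY: "opadd X Y \<in> DR A" by (rule DR_add[OF X Y])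
  have d: "d0 (opadd X Y) = (\<lambda>x. d0 X x + d0 Y x)" by (intro ext) (simp add: d0_def opadd_def)
  have e: "opsub (M (d0 (opadd X Y))) (scal (eps J X + eps J Y)) =
      opadd (opsub (M (d0 X)) (scal (eps J X))) (opsub (M (d0 Y)) (scal (eps J Y)))"
    unfolding d by (intro ext) (simp add: opsub_apply opadd_def M_def scal_def algebra_simps)
  have "opsub (M (d0 (opadd X Y))) (scal (eps J X + eps J Y)) \<in> J"
    unfolding e using il_add[OF ILJ] eps_char[OF X] eps_char[OF Y] by blast
  then show ?thesis using il_unique[OF ILJ Lid] eps_char[OF XY] by blast
qed

lemma eps_id: "eps J id = 1"
proof -
  have d: "d0 id = (\<lambda>_. 1)" by (intro ext) (simp add: d0_def)
  have eq: "opsub (M (d0 id)) (scal 1) = scal 0"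
    unfolding d by (intro ext) (simp add: opsub_apply M_def scal_def)
  have "opsub (M (d0 id)) (scal 1) \<in> J" unfolding eq by (rule il_zero[OF ILJ])
  then show ?thesis using il_unique[OF ILJ Lid] eps_char[OF DR_id] by blast
qed

lemma eps_scal0: "eps J (scal 0) = 0"
  by (rule eps_zero_L[OF il_zero[OF ILJ]])

lemma J_char: "J = {X \<in> DR A. \<forall>Q\<in>DR A. eps J (Q \<circ> X) = 0}" (is "J = ?K")
proof -
  have "left_ideal A ?K"
    unfolding left_ideal_def
  proof (intro conjI ballI)
    show "?K \<subseteq> DR A" by blast
    show "scal 0 \<in> ?K"
    proof -
      have "Q \<circ> scal 0 = scal 0" if "Q \<in> DR A" for Q using NF_zero[OF DR_NF[OF that]] .
      then show ?thesis using DR_scal eps_scal0 by simp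
    qed
  next
    fix X Y assume X: "X \<in> ?K" and Y: "Y \<in> ?K"
    have "opadd X Y \<in> DR A" using X Y DR_add by blast
    moreover have "eps J (Q \<circ> opadd X Y) = 0" if Q: "Q \<in> DR A" for Q
    proof -
      have "Q \<circ> opadd X Y = opadd (Q \<circ> X) (Q \<circ> Y)" by (rule NF_add_distrib[OF DR_NF[OF Q]])
      moreover have "Q \<circ> X \<in> DR A" "Q \<circ> Y \<in> DR A" using X Y Q DR_comp by blast+
      ultimately show ?thesis using eps_add X Y Q by simp
    qed
    ultimately show "opadd X Y \<in> ?K" by blast
  next
    fix P X assume P: "P \<in> DR A" and X: "X \<in> ?K"
    have "P \<circ> X \<in> DR A" using P X DR_comp by blast
    moreover have "eps J (Q \<circ> (P \<circ> X)) = 0" if Q: "Q \<in> DR A" for Q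
    proof -
      have "Q \<circ> P \<in> DR A" using Q P DR_comp by blast
      then have "eps J ((Q \<circ> P) \<circ> X) = 0" using X by blast
      then show ?thesis by (simp add: o_assoc)
    qed
    ultimately show "P \<circ> X \<in> ?K" by blast
  qed
  moreover have "J \<subseteq> ?K"
  proof
    fix X assume X: "X \<in> J"
    have "X \<in> DR A" using il_D[OF ILJ X] .
    moreover have "eps J (Q \<circ> X) = 0" if "Q \<in> DR A" for Q by (rule eps_zero_L[OF Lmul[OF that X]])
    ultimately show "X \<in> ?K" by blast
  qed
  moreover have "id \<notin> ?K"
  proof
    assume "id \<in> ?K"
    then have "eps J (id \<circ> id) = 0" using DR_id by blast
    then show False using eps_id by simp
  qed
  ultimately show ?thesis using Lmax by blast
qed

lemma J'_char: "J' = {X \<in> DR A. \<forall>Q\<in>DR A. eps J (X \<circ> Q) = 0}" (is "J' = ?K")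
proof -
  have "right_ideal A ?K"
    unfolding right_ideal_def
  proof (intro conjI ballI)
    show "?K \<subseteq> DR A" by blast
    show "scal 0 \<in> ?K"
    proof -
      have "scal 0 \<circ> Q = scal 0" for Q :: "'d lop" by (intro ext) (simp add: scal_def)
      then show ?thesis using DR_scal eps_scal0 by simp
    qed
  next
    fix X Y assume X: "X \<in> ?K" and Y: "Y \<in> ?K"
    have "opadd X Y \<in> DR A" using X Y DR_add by blast
    moreover have "eps J (opadd X Y \<circ> Q) = 0" if Q: "Q \<in> DR A" for Q
    proof -
      have "opadd X Y \<circ> Q = opadd (X \<circ> Q) (Y \<circ> Q)" by (intro ext) (simp add: opadd_def)
      moreover have "X \<circ> Q \<in> DR A" "Y \<circ> Q \<in> DR A" using X Y Q DR_comp by blast+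
      ultimately show ?thesis using eps_add X Y Q by simp
    qed
    ultimately show "opadd X Y \<in> ?K" by blast
  next
    fix P X assume P: "P \<in> DR A" and X: "X \<in> ?K"
    have "X \<circ> P \<in> DR A" using P X DR_comp by blast
    moreover have "eps J ((X \<circ> P) \<circ> Q) = 0" if Q: "Q \<in> DR A" for Q
    proof -
      have "P \<circ> Q \<in> DR A" using Q P DR_comp by blast
      then have "eps J (X \<circ> (P \<circ> Q)) = 0" using X by blast
      then show ?thesis by (simp add: o_assoc)
    qed
    ultimately show "X \<circ> P \<in> ?K" by blast
  qed
  moreover have "J' \<subseteq> ?K"
  proof
    fix X assume X: "X \<in> J'"
    have "X \<in> DR A" using il_D[OF ILR X] .
    moreover have "eps J (X \<circ> Q) = 0" if "Q \<in> DR A" for Q by (rule eps_zero_R[OF Rmul[OF that X]])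
    ultimately show "X \<in> ?K" by blast
  qed
  moreover have "id \<notin> ?K"
  proof
    assume "id \<in> ?K"
    then have "eps J (id \<circ> id) = 0" using DR_id by blast
    then show False using eps_id by simp
  qed
  ultimately show ?thesis using Rmax by blast
qed

lemma Ann_eq: "Ann_left A J = Ann_right A J'"
proof
  show "Ann_left A J \<subseteq> Ann_right A J'"
  proof
    fix P assume P: "P \<in> Ann_left A J"
    then have PD: "P \<in> DR A" and PJ: "\<forall>Q\<in>DR A. P \<circ> Q \<in> J" unfolding Ann_left_def by blast+
    have "Q \<circ> P \<in> J'" if Q: "Q \<in> DR A" for Q
    proof -
      have "Q \<circ> P \<in> DR A" using Q PD DR_comp by blast
      moreover have "eps J ((Q \<circ> P) \<circ> Q') = 0" if Q': "Q' \<in> DR A" for Q'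
      proof -
        have "P \<circ> Q' \<in> J" using PJ Q' by blast
        then have "P \<circ> Q' \<in> {X \<in> DR A. \<forall>Q\<in>DR A. eps J (Q \<circ> X) = 0}" using J_char by blast
        then have "eps J (Q \<circ> (P \<circ> Q')) = 0" using Q by blast
        then show ?thesis by (simp add: o_assoc)
      qed
      ultimately have "Q \<circ> P \<in> {X \<in> DR A. \<forall>Q\<in>DR A. eps J (X \<circ> Q) = 0}" by blast
      then show ?thesis using J'_char by blast
    qed
    then show "P \<in> Ann_right A J'" using PD unfolding Ann_right_def by blast
  qed
next
  show "Ann_right A J' \<subseteq> Ann_left A J"
  proof
    fix P assume P: "P \<in> Ann_right A J'"
    then have PD: "P \<in> DR A" and PJ: "\<forall>Q\<in>DR A. Q \<circ> P \<in> J'" unfolding Ann_right_def by blast+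
    have "P \<circ> Q \<in> J" if Q: "Q \<in> DR A" for Q
    proof -
      have "P \<circ> Q \<in> DR A" using Q PD DR_comp by blast
      moreover have "eps J (Q' \<circ> (P \<circ> Q)) = 0" if Q': "Q' \<in> DR A" for Q'
      proof -
        have "Q' \<circ> P \<in> J'" using PJ Q' by blast
        then have "Q' \<circ> P \<in> {X \<in> DR A. \<forall>Q\<in>DR A. eps J (X \<circ> Q) = 0}" using J'_char by blast
        then have "eps J ((Q' \<circ> P) \<circ> Q) = 0" using Q by blast
        then show ?thesis by (simp add: o_assoc)
      qed
      ultimately have "P \<circ> Q \<in> {X \<in> DR A. \<forall>Q\<in>DR A. eps J (Q \<circ> X) = 0}" by blast
      then show ?thesis using J_char by blast
    qed
    then show "P \<in> Ann_left A J" using PD unfolding Ann_left_def by blast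
  qed
qed

end

theorem proposition6p1:
  fixes A :: "('d::finite \<Rightarrow> int) set" and \<alpha> :: "'d \<Rightarrow> complex"
    and J J' :: "'d lop set"
  assumes "generates_Zd A"
    and "simple_quot_left A \<alpha> J"
    and "simple_quot_right A \<alpha> J'"
  shows "Ann_left A J = Ann_right A J'"
  by (rule Ann_eq[OF assms(2) assms(3)])

end
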